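(* Let $\mathcal C=\{\tau_k\mid k\in\mathcal K\}$ be a translation-based cipher on $V=(\mathbb F_2)^n=V_1\oplus\cdots\oplus V_b$, $V_j\cong(\mathbb F_2)^m$, with $\ell$ rounds, round maps $\gamma_h,\lambda_h$ ($1\le h\le \ell$) and key-schedule $\Phi:\mathcal K\to V^\ell$. Suppose $\Phi$ is 3-round independent at round $i$ for some $2\le i\le \ell-1$. Suppose that every S-box $f$ composing the parallel maps $\gamma_i$ and $\gamma_{i+1}$ is (1) differentially $2^r$-uniform, with $r<m$, and (2) strongly $(r-1)$-anti-invariant, and that $\lambda_i$ is strongly proper. Then there do not exist non-trivial partitions $\mathcal A,\mathcal B$ of $V$ such that for all $k\in\mathcal K$ the map $\tau_k$ maps $\mathcal A$ onto $\mathcal B$. In particular, $\Gamma(\mathcal C)=\langle\tau_k\mid k\in\mathcal K\rangle$ is primitive.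
   Context: Let $m,b>1$, $n=mb$, and $V=(\mathbb F_2)^n=V_1\oplus\cdots\oplus V_b$ with each $V_j\cong(\mathbb F_2)^m$. Permutations act on the right ($v\mapsto v\gamma$); $\sigma_v$ denotes the translation $x\mapsto x+v$. A parallel map is $\gamma\in\mathrm{Sym}(V)$ with $(v_1\oplus\cdots\oplus v_b)\gamma=v_1\gamma_1\oplus\cdots\oplus v_b\gamma_b$ for fixed permutations $\gamma_j$ of $V_j$ (the S-boxes). A wall is a subspace $\bigoplus_{j\in I}V_j$ with $\emptyset\ne I\subsetneq\{1,\dots,b\}$. A linear map $\lambda\in\mathrm{GL}(V)$ is strongly proper if no wall is mapped by $\lambda$ into a wall (including itself). A translation-based (tb) cipher with $\ell$ rounds: for each round $h$ there is a parallel map $\gamma_h$ with $0\gamma_h=0$ and $\lambda_h\in\mathrm{GL}(V)$, both independent of the key; a key-schedule $\Phi:\mathcal K\to V^\ell$, $k\mapsto(k_1,\dots,k_\ell)$; and the encryption function is $\tau_k=\gamma_1\lambda_1\sigma_{k_1}\gamma_2\lambda_2\sigma_{k_2}\cdots\gamma_\ell\lambda_\ell\sigma_{k_\ell}$. $\Phi$ is 3-round independent at round $i$ if there are fixed $\bar k_j\in V$ ($j\notin\{i-1,i,i+1\}$) such that for every $(k_{i-1},k_i,k_{i+1})\in V^3$ the tuple $(\bar k_1,\dots,\bar k_{i-2},k_{i-1},k_i,k_{i+1},\bar k_{i+2},\dots,\bar k_\ell)$ lies in $\mathrm{Im}(\Phi)$. For $f:(\mathbb F_2)^m\to(\mathbb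 F_2)^m$, $\delta_f(a,b)=|\{x: f(x+a)+f(x)=b\}|$ and $f$ is differentially $\delta$-uniform if $\delta=\max_{a\ne0,b}\delta_f(a,b)$. For $f$ with $f(0)=0$, $f$ is strongly $r$-anti-invariant if whenever $U,W$ are subspaces of $(\mathbb F_2)^m$ with $f(U)=W$, either $\dim U=\dim W<m-r$ or $U=W=(\mathbb F_2)^m$. A permutation $\rho$ maps a partition $\mathcal A$ onto a partition $\mathcal B$ if $\{A\rho: A\in\mathcal A\}=\mathcal B$. A partition of $V$ is trivial if it is $\{\{v\}:v\in V\}$ or $\{V\}$. A transitive group $G\le\mathrm{Sym}(V)$ is primitive if it preserves no non-trivial partition of $V$. *)

theory Defs
  imports Main "HOL.Vector_Spaces" "HOL-Library.Z2" "HOL-Library.Function_Algebras" "HOL-Library.Disjoint_Sets" "HOL-Library.Cardinality"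
begin

text \<open>A block V_j = (F_2)^m is the function space 'm => bit
  (m = CARD('m)); V = V_1 + ... + V_b is 'b => 'm => bit (b = CARD('b)),
  with pointwise addition (Function_Algebras).\<close>

definition sc :: "bit \<Rightarrow> ('a \<Rightarrow> bit) \<Rightarrow> ('a \<Rightarrow> bit)" where
  "sc c f = (\<lambda>x. c * f x)"

definition scV :: "bit \<Rightarrow> ('b \<Rightarrow> 'a \<Rightarrow> bit) \<Rightarrow> ('b \<Rightarrow> 'a \<Rightarrow> bit)" where
  "scV c v = (\<lambda>j. sc c (v j))"

abbreviation f2_subspace :: "('m \<Rightarrow> bit) set \<Rightarrow> bool" where
  "f2_subspace U \<equiv> module.subspace sc U"

abbreviation f2_dim :: "('m \<Rightarrow> bit) set \<Rightarrow> nat" where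
  "f2_dim U \<equiv> vector_space.dim sc U"

definition GL_V :: "(('b \<Rightarrow> 'm \<Rightarrow> bit) \<Rightarrow> ('b \<Rightarrow> 'm \<Rightarrow> bit)) set" where
  "GL_V = {L. Vector_Spaces.linear scV scV L \<and> bij L}"

definition parallel_map :: "('b \<Rightarrow> ('m \<Rightarrow> bit) \<Rightarrow> ('m \<Rightarrow> bit)) \<Rightarrow> ('b \<Rightarrow> 'm \<Rightarrow> bit) \<Rightarrow> ('b \<Rightarrow> 'm \<Rightarrow> bit)" where
  "parallel_map S v = (\<lambda>j. S j (v j))"

definition wall :: "'b set \<Rightarrow> ('b \<Rightarrow> 'm \<Rightarrow> bit) set" where
  "wall I = {v. \<forall>j. j \<notin> I \<longrightarrow> v j = 0}"

definition is_wall :: "('b \<Rightarrow> 'm \<Rightarrow> bit) set \<Rightarrow> bool" where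
  "is_wall W \<longleftrightarrow> (\<exists>I. I \<noteq> {} \<and> I \<noteq> UNIV \<and> W = wall I)"

definition strongly_proper :: "(('b \<Rightarrow> 'm \<Rightarrow> bit) \<Rightarrow> ('b \<Rightarrow> 'm \<Rightarrow> bit)) \<Rightarrow> bool" where
  "strongly_proper L \<longleftrightarrow> L \<in> GL_V \<and>
     (\<forall>W1 W2. is_wall W1 \<and> is_wall W2 \<longrightarrow> \<not> (L ` W1 \<subseteq> W2))"

text \<open>Encryption: rounds applied left to right (right action):
  v |-> v gamma_1 lambda_1 sigma_{k_1} ... gamma_h lambda_h sigma_{k_h}.\<close>
fun enc_rounds :: "(nat \<Rightarrow> 'b \<Rightarrow> ('m \<Rightarrow> bit) \<Rightarrow> ('m \<Rightarrow> bit))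
    \<Rightarrow> (nat \<Rightarrow> ('b \<Rightarrow> 'm \<Rightarrow> bit) \<Rightarrow> ('b \<Rightarrow> 'm \<Rightarrow> bit))
    \<Rightarrow> (nat \<Rightarrow> ('b \<Rightarrow> 'm \<Rightarrow> bit)) \<Rightarrow> nat \<Rightarrow> ('b \<Rightarrow> 'm \<Rightarrow> bit) \<Rightarrow> ('b \<Rightarrow> 'm \<Rightarrow> bit)" where
  "enc_rounds S L kk 0 v = v"
| "enc_rounds S L kk (Suc h) v =
     L (Suc h) (parallel_map (S (Suc h)) (enc_rounds S L kk h v)) + kk (Suc h)"

text \<open>Key schedule Phi : K -> V^ell, with Phi k h = k_h for 1 <= h <= ell.\<close>
definition three_round_indep ::
  "('k \<Rightarrow> nat \<Rightarrow> ('b \<Rightarrow> 'm \<Rightarrow> bit)) \<Rightarrow> nat \<Rightarrow> nat \<Rightarrow> bool" where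
  "three_round_indep Phi ell i \<longleftrightarrow>
     (\<exists>kbar. \<forall>x y z. \<exists>k. \<forall>h\<in>{1..ell}.
        Phi k h = (if h = i - 1 then x else if h = i then y else if h = i + 1 then z else kbar h))"

definition delta_f :: "(('m \<Rightarrow> bit) \<Rightarrow> ('m \<Rightarrow> bit)) \<Rightarrow> ('m \<Rightarrow> bit) \<Rightarrow> ('m \<Rightarrow> bit) \<Rightarrow> nat" where
  "delta_f f a b = card {x. f (x + a) + f x = b}"

definition diff_uniform :: "(('m \<Rightarrow> bit) \<Rightarrow> ('m \<Rightarrow> bit)) \<Rightarrow> nat \<Rightarrow> bool" where
  "diff_uniform f \<delta> \<longleftrightarrow> \<delta> = Max {delta_f f a b | a b. a \<noteq> 0}"

definition strongly_anti_invariant :: "(('m::finite \<Rightarrow> bit) \<Rightarrow> ('m \<Rightarrow> bit)) \<Rightarrow> nat \<Rightarrow> bool" where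
  "strongly_anti_invariant f r \<longleftrightarrow>
     (\<forall>U W. f2_subspace U \<and> f2_subspace W \<and> f ` U = W \<longrightarrow>
        (f2_dim U = f2_dim W \<and> f2_dim U < CARD('m) - r) \<or> (U = UNIV \<and> W = UNIV))"

definition trivial_partition :: "'a set set \<Rightarrow> bool" where
  "trivial_partition P \<longleftrightarrow> P = {{v} | v. True} \<or> P = {UNIV}"

definition maps_partition :: "('a \<Rightarrow> 'a) \<Rightarrow> 'a set set \<Rightarrow> 'a set set \<Rightarrow> bool" where
  "maps_partition g A B \<longleftrightarrow> (\<lambda>X. g ` X) ` A = B"

inductive_set gen_group :: "('a \<Rightarrow> 'a) set \<Rightarrow> ('a \<Rightarrow> 'a) set" for G where
  gen_id: "id \<in> gen_group G"
| gen_mult: "g \<in> G \<Longrightarrow> h \<in> gen_group G \<Longrightarrow> h \<circ> g \<in> gen_group G"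
| gen_inv: "g \<in> G \<Longrightarrow> h \<in> gen_group G \<Longrightarrow> h \<circ> inv g \<in> gen_group G"

definition primitive :: "('a \<Rightarrow> 'a) set \<Rightarrow> bool" where
  "primitive G \<longleftrightarrow> (\<forall>x y. \<exists>g\<in>G. g x = y) \<and>
     (\<forall>P. partition_on UNIV P \<and> (\<forall>g\<in>G. maps_partition g P P) \<longrightarrow> trivial_partition P)"

end

theory Submission
  imports Defs
begin

lemma bit_cases2: "(c::bit) = 0 \<or> c = 1"
  by (cases "c = 0") simp_all

lemma UNIV_bit: "(UNIV :: bit set) = {0,1}"
  using bit_cases2 by blast

instance bit :: finite
  by standard (simp add: UNIV_bit)

lemma card_UNIV_bit: "CARD(bit) = 2"
  by (simp add: UNIV_bit)

lemma vs_sc: "vector_space (sc :: bit \<Rightarrow> ('a \<Rightarrow> bit) \<Rightarrow> _)"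
  unfolding vector_space_def module_def sc_def
  by (auto simp: fun_eq_iff algebra_simps)

interpretation F2: vector_space "sc :: bit \<Rightarrow> ('a \<Rightarrow> bit) \<Rightarrow> _"
  by (rule vs_sc)

lemma sc_cases: "sc c x = 0 \<or> sc c x = x"
  using bit_cases2[of c] by (auto simp: sc_def fun_eq_iff)

lemma card_span_le:
  fixes B :: "('a::finite \<Rightarrow> bit) set"
  shows "card (F2.span B) \<le> 2 ^ card B"
proof -
  have "finite B" by simp
  then show ?thesis
  proof (induction B rule: finite_induct)
    case empty
    then show ?case by simp
  next
    case (insert a B)
    have sub: "F2.span (insert a B) \<subseteq> F2.span B \<union> (\<lambda>x. x + a) ` F2.span B"
    proof
      fix x assume "x \<in> F2.span (insert a B)"
      then obtain k where k: "x - sc k a \<in> F2.span B" by (auto simp: F2.span_insert)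
      show "x \<in> F2.span B \<union> (\<lambda>x. x + a) ` F2.span B"
      proof (cases "sc k a = 0")
        case True then show ?thesis using k by auto
      next
        case False
        then have "sc k a = a" using sc_cases by blast
        then have "x = (x - a) + a" and "x - a \<in> F2.span B" using k by auto
        then show ?thesis by blast
      qed
    qed
    have "card (F2.span (insert a B)) \<le> card (F2.span B \<union> (\<lambda>x. x + a) ` F2.span B)"
      by (rule card_mono[OF _ sub]) simp
    also have "\<dots> \<le> card (F2.span B) + card ((\<lambda>x. x + a) ` F2.span B)"
      by (rule card_Un_le)
    also have "\<dots> \<le> card (F2.span B) + card (F2.span B)"
      using card_image_le[of "F2.span B" "\<lambda>x. x + a"] by simp
    also have "\<dots> \<le> 2 ^ card (insert a B)"
      using insert by simp
    finally show ?case .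
  qed
qed

lemma card_le_dim:
  fixes Y :: "('a::finite \<Rightarrow> bit) set"
  shows "card Y \<le> 2 ^ f2_dim Y"
proof -
  obtain B where "B \<subseteq> Y" "F2.independent B" "Y \<subseteq> F2.span B" "card B = F2.dim Y"
    by (rule F2.basis_exists)
  then have "card Y \<le> card (F2.span B)" by (intro card_mono) auto

  also have "\<dots> \<le> 2 ^ card B" by (rule card_span_le)
  finally show ?thesis using \<open>card B = F2.dim Y\<close> by simp
qed

lemma card_V: "CARD('a::finite \<Rightarrow> bit) = 2 ^ CARD('a)"
  by (simp add: card_fun card_UNIV_bit)

lemma add_closed_subspace:
  fixes U :: "('a \<Rightarrow> bit) set"
  assumes "0 \<in> U" "\<And>x y. x \<in> U \<Longrightarrow> y \<in> U \<Longrightarrow> x + y \<in> U"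
  shows "f2_subspace U"
proof -
  have "sc c x \<in> U" if "x \<in> U" for c x
    using sc_cases[of c x] assms(1) that by (cases "sc c x = 0") auto
  then show ?thesis
    unfolding module.subspace_def[OF F2.module_axioms] using assms by blast
qed

lemma bit_add_self [simp]: "(c::bit) + c = 0"
  using bit_cases2[of c] by auto

lemma vadd_self [simp]: "(x::'a \<Rightarrow> bit) + x = 0"
  by (simp add: fun_eq_iff)

lemma vvadd_self [simp]: "(x::'b \<Rightarrow> 'a \<Rightarrow> bit) + x = 0"
  by (simp add: fun_eq_iff)

lemma vadd_cancel: "(x::'a \<Rightarrow> bit) + y + y = x"
  by (simp add: add.assoc)

lemma vvadd_cancel: "(x::'b \<Rightarrow> 'a \<Rightarrow> bit) + y + y = x"
  by (simp add: add.assoc)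

lemma vadd_eq0: "(x::'a \<Rightarrow> bit) + y = 0 \<longleftrightarrow> x = y"
  by (metis vadd_cancel add_0)

lemma sum_apply_fun: "sum g A k = (\<Sum>j\<in>A. g j k)"
  by (induction A rule: infinite_finite_induct) auto

definition addcl :: "'a::monoid_add set \<Rightarrow> bool" where
  "addcl U \<longleftrightarrow> 0 \<in> U \<and> (\<forall>x\<in>U. \<forall>y\<in>U. x + y \<in> U)"

definition cosetmap :: "('a::plus \<Rightarrow> 'a) \<Rightarrow> 'a set \<Rightarrow> 'a set \<Rightarrow> bool" where
  "cosetmap f U U' \<longleftrightarrow> (\<forall>a. f ` ((+) a ` U) = (+) (f a) ` U')"

definition emb :: "'b \<Rightarrow> ('m \<Rightarrow> bit) \<Rightarrow> ('b \<Rightarrow> 'm \<Rightarrow> bit)" where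
  "emb j w = (\<lambda>k. if k = j then w else 0)"

lemma emb_add: "emb j (a + b) = emb j a + emb j b"
  by (auto simp: emb_def fun_eq_iff)

lemma emb_0 [simp]: "emb j 0 = 0"
  by (auto simp: emb_def fun_eq_iff)

lemma emb_inj: "emb j a = emb j b \<longleftrightarrow> a = b"
  by (auto simp: emb_def fun_eq_iff)

lemma addcl_sum:
  assumes "addcl U" "\<And>j. j \<in> A \<Longrightarrow> g j \<in> U" "finite A"
  shows "sum g A \<in> U"
  using assms(3,2) by (induction A rule: finite_induct) (use assms(1) in \<open>auto simp: addcl_def\<close>)

lemma diff_bound:
  fixes f :: "('m::finite \<Rightarrow> bit) \<Rightarrow> ('m \<Rightarrow> bit)"
  assumes "diff_uniform f d" "a \<noteq> 0"
  shows "delta_f f a b \<le> d"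
proof -
  have "{delta_f f a b | a b. a \<noteq> 0} \<subseteq> (\<lambda>(a,b). delta_f f a b) ` UNIV" by auto
  then have fin: "finite {delta_f f a b | a b. a \<noteq> 0}" by (rule finite_subset) simp
  have "delta_f f a b \<in> {delta_f f a b | a b. a \<noteq> 0}" using assms(2) by blast
  then show ?thesis using assms(1) Max_ge[OF fin] unfolding diff_uniform_def by blast
qed

lemma diff_count:
  fixes f :: "('m::finite \<Rightarrow> bit) \<Rightarrow> ('m \<Rightarrow> bit)"
  assumes "diff_uniform f d" "a \<noteq> 0" "\<And>t. f (t + a) + f t \<in> Z"
  shows "2 ^ CARD('m) \<le> d * card Z"
proof -
  have "(UNIV :: ('m \<Rightarrow> bit) set) = (\<Union>b\<in>Z. {t. f (t + a) + f t = b})"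
    using assms(3) by auto
  then have "2 ^ CARD('m) = card (\<Union>b\<in>Z. {t. f (t + a) + f t = b})"
    by (metis card_V)
  also have "\<dots> \<le> (\<Sum>b\<in>Z. card {t. f (t + a) + f t = b})"
    by (rule card_UN_le) simp
  also have "\<dots> \<le> (\<Sum>b\<in>Z. d)"
    by (intro sum_mono) (use diff_bound[OF assms(1,2)] in \<open>auto simp: delta_f_def\<close>)
  also have "\<dots> = d * card Z" by simp
  finally show ?thesis .
qed

lemma sbox_full:
  fixes f :: "('m::finite \<Rightarrow> bit) \<Rightarrow> ('m \<Rightarrow> bit)"
  assumes bij: "bij f" and f0: "f 0 = 0" and du: "diff_uniform f (2 ^ r)"
    and sai: "strongly_anti_invariant f (r - 1)"
    and aU: "addcl U" and aY: "addcl Y" and img: "f ` U = Y"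
    and dif: "\<And>t w. w \<in> U \<Longrightarrow> f (t + w) + f t \<in> Y"
    and w0: "w0 \<in> U" "w0 \<noteq> 0"
  shows "U = UNIV \<and> Y = UNIV"
proof -
  have "f (t + w0) + f t \<in> Y - {0}" for t
  proof -
    have "t + w0 \<noteq> t" using w0(2) by (metis add_cancel_right_right)
    then have "f (t + w0) \<noteq> f t" using bij by (metis bij_def inj_eq)
    then show ?thesis using dif[OF w0(1)] vadd_eq0 by blast
  qed
  from diff_count[OF du w0(2) this]
  have c1: "2 ^ CARD('m) \<le> 2 ^ r * card (Y - {0})" .
  have "0 \<in> Y" using aY by (simp add: addcl_def)
  then have "card (Y - {0}) < card Y" by (intro psubset_card_mono) auto
  also have "card Y \<le> 2 ^ f2_dim Y" by (rule card_le_dim)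
  finally have "2 ^ r * card (Y - {0}) < 2 ^ r * 2 ^ f2_dim Y" by simp
  with c1 have "(2::nat) ^ CARD('m) < 2 ^ r * 2 ^ f2_dim Y" by (rule le_less_trans)
  then have "(2::nat) ^ CARD('m) < 2 ^ (r + f2_dim Y)" by (simp add: power_add)
  then have lt: "CARD('m) < r + f2_dim Y" by simp
  have sU: "f2_subspace U" "f2_subspace Y"
    using aU aY by (auto intro!: add_closed_subspace simp: addcl_def)
  from sai sU img have "(f2_dim U = f2_dim Y \<and> f2_dim U < CARD('m) - (r - 1)) \<or> (U = UNIV \<and> Y = UNIV)"
    unfolding strongly_anti_invariant_def by blast
  with lt show ?thesis by auto
qed

lemma pm_emb:
  assumes "\<And>k. F k 0 = 0"
  shows "parallel_map F (emb j w) = emb j (F j w)"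
  using assms by (auto simp: parallel_map_def emb_def fun_eq_iff)

lemma lemmaC:
  fixes F :: "'b::finite \<Rightarrow> ('m::finite \<Rightarrow> bit) \<Rightarrow> ('m \<Rightarrow> bit)"
  assumes bij: "\<And>j. bij (F j)" and F0: "\<And>j. F j 0 = 0"
    and du: "\<And>j. diff_uniform (F j) (2 ^ r)" and rm: "r < CARD('m)"
    and sai: "\<And>j. strongly_anti_invariant (F j) (r - 1)"
    and aU: "addcl U" and aU': "addcl U'" and cm: "cosetmap (parallel_map F) U U'"
  shows "U = wall {j. \<exists>u\<in>U. u j \<noteq> 0} \<and> U' = wall {j. \<exists>u\<in>U. u j \<noteq> 0}"
proof -
  define g where "g = parallel_map F"
  define I where "I = {j. \<exists>u\<in>U. u j \<noteq> 0}"
  have g0: "g 0 = 0" using F0 by (simp add: g_def parallel_map_def fun_eq_iff)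
  have F1: "g (x + u) + g x \<in> U'" if "u \<in> U" for x u
  proof -
    have "g (x + u) \<in> g ` ((+) x ` U)" using that by blast
    also have "\<dots> = (+) (g x) ` U'" using cm by (simp add: cosetmap_def g_def)
    finally obtain u' where "u' \<in> U'" "g (x + u) = g x + u'" by blast
    then show ?thesis by (metis add.commute vvadd_cancel)
  qed
  have F2: "g ` U = U'"
    using cm g0 unfolding cosetmap_def g_def[symmetric] by (metis add_0 image_add_0 image_ident)
  have gemb: "g (emb j w) = emb j (F j w)" for j w
    unfolding g_def using F0 by (rule pm_emb)
  have full: "emb j w \<in> U \<and> emb j w \<in> U'" if jI: "j \<in> I" for j w
  proof -
    obtain u where u: "u \<in> U" "u j \<noteq> 0" using jI by (auto simp: I_def)
    define Uj where "Uj = {w. emb j w \<in> U}"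
    define Y where "Y = {w. emb j w \<in> U'}"
    have aUj: "addcl Uj" using aU by (auto simp: addcl_def Uj_def emb_add)
    have aY: "addcl Y" using aU' by (auto simp: addcl_def Y_def emb_add)
    have s1: "F j (t + w) + F j t \<in> Y" if "w \<in> Uj" for t w
    proof -
      have "g (emb j t + emb j w) + g (emb j t) \<in> U'"
        using F1 that by (simp add: Uj_def)
      then show ?thesis by (simp add: Y_def gemb emb_add[symmetric])
    qed
    have s2: "F j ` Uj = Y"
    proof
      show "F j ` Uj \<subseteq> Y" using s1[of _ 0] F0 by auto
      show "Y \<subseteq> F j ` Uj"
      proof
        fix y assume "y \<in> Y"
        then have "emb j y \<in> g ` U" using F2 by (simp add: Y_def)
        then obtain v where v: "v \<in> U" "g v = emb j y" by auto
        have "v k = 0" if "k \<noteq> j" for k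
        proof -
          have "F k (v k) = F k 0" using v(2) that F0
            by (auto simp: g_def parallel_map_def emb_def fun_eq_iff dest: fun_cong[where x=k])
          then show ?thesis using bij[of k] by (metis bij_def inj_eq)
        qed
        then have "v = emb j (v j)" by (auto simp: emb_def fun_eq_iff)
        then have "v j \<in> Uj" "F j (v j) = y"
          using v by (auto simp: Uj_def) (metis emb_inj gemb)
        then show "y \<in> F j ` Uj" by blast
      qed
    qed
    define D where "D t = F j (t + u j) + F j t" for t
    have "D t + D 0 \<in> Y" for t
    proof -
      have a1: "g (emb j t + u) + g (emb j t) \<in> U'" by (rule F1[OF u(1)])
      have a2: "g (emb j 0 + u) + g (emb j 0) \<in> U'" by (rule F1[OF u(1)])
      have "g (emb j t + u) + g (emb j t) + (g (emb j 0 + u) + g (emb j 0)) \<in> U'"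
        using a1 a2 aU' unfolding addcl_def by blast
      moreover have "g (emb j t + u) + g (emb j t) + (g (emb j 0 + u) + g (emb j 0)) = emb j (D t + D 0)"
        using F0 by (auto simp: g_def parallel_map_def emb_def fun_eq_iff D_def)
      ultimately show ?thesis by (simp add: Y_def)
    qed
    then have "F j (t + u j) + F j t \<in> (+) (D 0) ` Y" for t
      by (metis D_def add.commute image_eqI vvadd_cancel vadd_cancel)
    from diff_count[OF du u(2) this]
    have "2 ^ CARD('m) \<le> 2 ^ r * card ((+) (D 0) ` Y)" .
    also have "\<dots> \<le> 2 ^ r * card Y" using card_image_le[of Y "(+) (D 0)"] by simp
    finally have "2 ^ CARD('m) \<le> (2::nat) ^ r * card Y" .
    moreover have "(2::nat) ^ r < 2 ^ CARD('m)" using rm by simp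
    ultimately have "card Y > 1" by (metis le_less_trans mult.right_neutral nat_mult_less_cancel_disj not_le)
    have "\<not> Y \<subseteq> {0}"
    proof
      assume "Y \<subseteq> {0}"
      then have "card Y \<le> card {0::'m \<Rightarrow> bit}" by (intro card_mono) auto
      then show False using \<open>card Y > 1\<close> by simp
    qed
    then obtain y where y: "y \<in> Y" "y \<noteq> 0" by blast
    then obtain s where s: "s \<in> Uj" "F j s = y" using s2 by blast
    then have "s \<noteq> 0" using y F0 by auto
    from sbox_full[OF bij F0 du sai aUj aY s2 s1 s(1) this]
    have "Uj = UNIV \<and> Y = UNIV" .
    then show ?thesis by (auto simp: Uj_def Y_def)
  qed
  have sumv: "v = (\<Sum>j\<in>UNIV. emb j (v j))" for v :: "'b \<Rightarrow> 'm \<Rightarrow> bit"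
    by (auto simp: fun_eq_iff sum_apply_fun emb_def if_distrib cong: if_cong)
  have wallU: "wall I \<subseteq> U" "wall I \<subseteq> U'"
  proof -
    show "wall I \<subseteq> U"
    proof
      fix v :: "'b \<Rightarrow> 'm \<Rightarrow> bit" assume v: "v \<in> wall I"
      have "(\<Sum>j\<in>UNIV. emb j (v j)) \<in> U"
      proof (rule addcl_sum[OF aU])
        fix j show "emb j (v j) \<in> U"
        proof (cases "j \<in> I")
          case True then show ?thesis using full by blast
        next
          case False then have "v j = 0" using v by (simp add: wall_def)
          then show ?thesis using aU by (simp add: addcl_def)
        qed
      qed simp
      then show "v \<in> U" using sumv by metis
    qed
    show "wall I \<subseteq> U'"
    proof
      fix v :: "'b \<Rightarrow> 'm \<Rightarrow> bit" assume v: "v \<in> wall I"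
      have "(\<Sum>j\<in>UNIV. emb j (v j)) \<in> U'"
      proof (rule addcl_sum[OF aU'])
        fix j show "emb j (v j) \<in> U'"
        proof (cases "j \<in> I")
          case True then show ?thesis using full by blast
        next
          case False then have "v j = 0" using v by (simp add: wall_def)
          then show ?thesis using aU' by (simp add: addcl_def)
        qed
      qed simp
      then show "v \<in> U'" using sumv by metis
    qed
  qed
  have "U \<subseteq> wall I" by (auto simp: wall_def I_def)
  moreover have "U' \<subseteq> wall I"
  proof
    fix y assume "y \<in> U'"
    then obtain u where u: "u \<in> U" "y = g u" using F2 by auto
    then have "u \<in> wall I" using \<open>U \<subseteq> wall I\<close> by auto
    then show "y \<in> wall I" using u F0 by (auto simp: wall_def g_def parallel_map_def)
  qed
  ultimately show ?thesis using wallU by (auto simp: I_def)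
qed

type_synonym ('b,'m) vv = "'b \<Rightarrow> 'm \<Rightarrow> bit"

lemma coset_eq:
  fixes W :: "('b,'m) vv set"
  assumes aW: "addcl W" and cW: "c \<in> W"
  shows "(+) (b + c) ` W = (+) b ` W"
proof
  show "(+) (b + c) ` W \<subseteq> (+) b ` W"
  proof
    fix z assume "z \<in> (+) (b + c) ` W"
    then obtain w where w: "w \<in> W" "z = b + c + w" by blast
    have "c + w \<in> W" using aW cW w(1) unfolding addcl_def by blast
    moreover have "z = b + (c + w)" using w(2) by (simp only: add.assoc)
    ultimately show "z \<in> (+) b ` W" by blast
  qed
  show "(+) b ` W \<subseteq> (+) (b + c) ` W"
  proof
    fix z assume "z \<in> (+) b ` W"
    then obtain w where w: "w \<in> W" "z = b + w" by blast
    have "c + w \<in> W" using aW cW w(1) unfolding addcl_def by blast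
    moreover have "z = (b + c) + (c + w)"
    proof -
      have "(b + c) + (c + w) = b + (c + c) + w" by (simp only: add.assoc)
      also have "\<dots> = b + w" by simp
      finally show ?thesis using w(2) by simp
    qed
    ultimately show "z \<in> (+) (b + c) ` W" by blast
  qed
qed

lemma coset_meet:
  fixes W :: "('b,'m) vv set"
  assumes aW: "addcl W" and z1: "z \<in> (+) b1 ` W" and z2: "z \<in> (+) b2 ` W"
  shows "(+) b1 ` W = (+) b2 ` W"
proof -
  obtain w1 where w1: "w1 \<in> W" "z = b1 + w1" using z1 by blast
  obtain w2 where w2: "w2 \<in> W" "z = b2 + w2" using z2 by blast
  have "b1 + w1 = b2 + w2" using w1(2) w2(2) by simp
  then have "b1 + w1 + w1 = b2 + w2 + w1" by simp
  then have e: "b1 = b2 + (w2 + w1)" by (simp add: add.assoc)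
  have ww: "w2 + w1 \<in> W" using w1 w2 aW unfolding addcl_def by blast
  show ?thesis using coset_eq[OF aW ww, of b2] e by simp
qed

lemma transinv:
  fixes P :: "('b,'m) vv set set"
  assumes part: "partition_on UNIV P" and inv: "\<And>x. (image ((+) x)) ` P = P"
  shows "\<exists>U. addcl U \<and> (\<forall>a. (+) a ` U \<in> P) \<and> (\<forall>X\<in>P. \<exists>a. X = (+) a ` U) \<and>
           (\<not> trivial_partition P \<longrightarrow> U \<noteq> {0} \<and> U \<noteq> UNIV)"
proof -
  have uniq: "X = Y" if "X \<in> P" "Y \<in> P" "z \<in> X" "z \<in> Y" for X Y z
  proof (rule ccontr)
    assume "X \<noteq> Y"
    then have "X \<inter> Y = {}" using disjointD[OF partition_onD2[OF part] that(1,2)] by blast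
    then show False using that(3,4) by blast
  qed
  have "(0::('b,'m) vv) \<in> \<Union>P" by (metis partition_onD1[OF part] UNIV_I)
  then obtain U where U: "U \<in> P" "0 \<in> U" by blast
  have tr: "(+) a ` U \<in> P" for a
  proof -
    have "(+) a ` U \<in> (image ((+) a)) ` P" using U(1) by (rule imageI)
    then show ?thesis by (simp only: inv)
  qed
  have cl: "u1 + u2 \<in> U" if "u1 \<in> U" "u2 \<in> U" for u1 u2
  proof -
    have "u2 = u2 + 0" by simp
    then have "u2 \<in> (+) u2 ` U" using U(2) by (rule image_eqI)
    then have "(+) u2 ` U = U" by (rule uniq[OF tr U(1) _ that(2)])
    moreover have "u2 + u1 \<in> (+) u2 ` U" using that(1) by (rule imageI)
    ultimately show ?thesis by (simp add: add.commute)
  qed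
  have aU: "addcl U" using U cl by (auto simp: addcl_def)
  have all: "\<exists>a. X = (+) a ` U" if XP: "X \<in> P" for X
  proof -
    have "X \<noteq> {}" using partition_onD3[OF part] XP by blast
    then obtain a where "a \<in> X" by blast
    moreover have "a = a + 0" by simp
    then have "a \<in> (+) a ` U" using U(2) by (rule image_eqI)
    ultimately have "X = (+) a ` U" by (rule uniq[OF XP tr])
    then show ?thesis by blast
  qed
  have nt: "U \<noteq> {0} \<and> U \<noteq> UNIV" if "\<not> trivial_partition P"
  proof (intro conjI notI)
    assume "U = {0}"
    have "\<forall>X\<in>P. \<exists>v. X = {v}" using all \<open>U = {0}\<close> by simp
    moreover have "{v} \<in> P" for v using tr[of v] \<open>U = {0}\<close> by simp
    ultimately have "P = {{v} | v. True}" by blast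
    then show False using that by (simp add: trivial_partition_def)
  next
    assume "U = UNIV"
    have "(+) a ` U = UNIV" for a
    proof -
      have "y = a + (a + y)" for y by (simp add: add.assoc[symmetric])
      then show ?thesis using \<open>U = UNIV\<close> by blast
    qed
    then have "\<forall>X\<in>P. X = UNIV" using all by metis
    moreover have "UNIV \<in> P" using tr[of 0] \<open>U = UNIV\<close> by simp
    ultimately have "P = {UNIV}" by blast
    then show False using that by (simp add: trivial_partition_def)
  qed
  show ?thesis
    apply (rule exI[of _ U])
    using aU tr all nt by blast
qed

lemma partition_image:
  assumes "partition_on UNIV P" "bij g"
  shows "partition_on UNIV ((image g) ` P)"
proof -
  have "partition_on (g ` UNIV) ((`) g ` P - {{}})"
    by (rule partition_on_inj_image[OF assms(1)]) (use assms(2) in \<open>simp add: bij_is_inj\<close>)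
  moreover have "{} \<notin> (`) g ` P" using partition_onD3[OF assms(1)] by auto
  then have "(`) g ` P - {{}} = (`) g ` P" by blast
  moreover have "g ` UNIV = UNIV" using assms(2) by (simp add: bij_def)
  ultimately show ?thesis by simp
qed

lemma trivial_image:
  assumes "trivial_partition P" "bij g"
  shows "trivial_partition ((image g) ` P)"
  using assms unfolding trivial_partition_def
proof (elim disjE)
  assume Peq: "P = {{v} |v. True}"
  have "(image g) ` P = {{v} |v. True}"
  proof (rule set_eqI)
    fix X
    show "X \<in> image g ` P \<longleftrightarrow> X \<in> {{v} |v. True}"
    proof
      assume "X \<in> image g ` P"
      then obtain v where "X = g ` {v}" using Peq by auto
      then show "X \<in> {{v} |v. True}" by auto
    next
      assume "X \<in> {{v} |v. True}"
      then obtain u where u: "X = {u}" by auto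
      have "u = g (inv g u)" using assms(2) by (simp add: bij_is_surj surj_f_inv_f)
      then have "X = g ` {inv g u}" using u by simp
      moreover have "{inv g u} \<in> P" using Peq by auto
      ultimately show "X \<in> image g ` P" by blast
    qed
  qed
  then show "image g ` P = {{v} |v. True} \<or> image g ` P = {UNIV}" by blast
next
  assume "P = {UNIV}"
  then show "image g ` P = {{v} |v. True} \<or> image g ` P = {UNIV}" using assms(2)
    by (simp add: bij_def)
qed

lemma nontrivial_image:
  assumes "\<not> trivial_partition P" "bij g"
  shows "\<not> trivial_partition ((image g) ` P)"
proof
  assume "trivial_partition ((image g) ` P)"
  then have "trivial_partition ((image (inv g)) ` ((image g) ` P))"
    using trivial_image assms(2) bij_imp_bij_inv by blast
  moreover have "(image (inv g)) ` ((image g) ` P) = P"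
    using assms(2) by (simp add: image_image bij_is_inj image_inv_f_f)
  ultimately show False using assms(1) by simp
qed

lemma twolayer:
  fixes g h :: "('b,'m) vv \<Rightarrow> ('b,'m) vv"
  assumes bg: "bij g" and bh: "bij h" and g0: "g 0 = 0" and aU: "addcl U" and aW: "addcl W"
    and hyp: "\<And>a y. \<exists>b. (\<lambda>w. h (g w + y)) ` ((+) a ` U) = (+) b ` W"
  shows "\<exists>X. addcl X \<and> cosetmap g U X \<and> cosetmap h X W"
proof -
  define T where "T a y = (+) y ` (g ` ((+) a ` U))" for a y
  have pc: "(\<lambda>z. z + y) = (+) y" for y :: "('b,'m) vv" by (simp add: fun_eq_iff add.commute)
  have hT: "\<exists>b. h ` T a y = (+) b ` W" for a y
  proof -
    obtain b where bA: "(\<lambda>w. h (g w + y)) ` ((+) a ` U) = (+) b ` W"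
      using hyp[where a=a and y=y] by (elim exE)
    have bB: "h ` T a y = (\<lambda>w. h (g w + y)) ` ((+) a ` U)"
      unfolding T_def image_image by (simp add: add.commute)
    have "h ` T a y = (+) b ` W" using bB bA by (rule trans)
    then show ?thesis by blast
  qed
  have K: "T a1 y1 = T a2 y2" if z1: "z \<in> T a1 y1" and z2: "z \<in> T a2 y2" for a1 y1 a2 y2 z
  proof -
    obtain b1 where b1: "h ` T a1 y1 = (+) b1 ` W" using hT by blast
    obtain b2 where b2: "h ` T a2 y2 = (+) b2 ` W" using hT by blast
    have "h z \<in> h ` T a1 y1" using z1 by (rule imageI)
    then have hz1: "h z \<in> (+) b1 ` W" by (simp only: b1)
    have "h z \<in> h ` T a2 y2" using z2 by (rule imageI)
    then have hz2: "h z \<in> (+) b2 ` W" by (simp only: b2)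
    have "(+) b1 ` W = (+) b2 ` W" by (rule coset_meet[OF aW hz1 hz2])
    then have "h ` T a1 y1 = h ` T a2 y2" by (simp only: b1 b2)
    then show ?thesis using bh by (simp add: bij_is_inj inj_image_eq_iff)
  qed
  define X where "X = g ` U"
  have T0y: "T 0 y = (+) y ` X" for y by (simp add: T_def X_def)
  have T00: "T 0 0 = X" using T0y[of 0] by simp
  have Ta0: "T a 0 = g ` ((+) a ` U)" for a by (simp add: T_def)
  have U0: "0 \<in> U" using aU by (simp add: addcl_def)
  have X0: "0 \<in> X" unfolding X_def using U0 g0 by (metis imageI)
  have inT: "y \<in> T 0 y" for y
  proof -
    have "y = y + 0" by simp
    then have "y \<in> (+) y ` X" using X0 by (rule image_eqI)
    then show ?thesis by (simp only: T0y)
  qed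
  have aX: "addcl X"
  proof -
    have "x1 + x2 \<in> X" if x1: "x1 \<in> X" and x2: "x2 \<in> X" for x1 x2
    proof -
      have "x2 \<in> T 0 0" using x2 T00 by simp
      then have "T 0 x2 = T 0 0" by (rule K[OF inT])
      then have e: "(+) x2 ` X = X" using T0y T00 by simp
      have "x2 + x1 \<in> (+) x2 ` X" using x1 by (rule imageI)
      then have "x2 + x1 \<in> X" by (simp only: e)
      then show ?thesis by (simp add: add.commute)
    qed
    then show ?thesis using X0 by (simp add: addcl_def)
  qed
  have cg: "cosetmap g U X"
    unfolding cosetmap_def
  proof
    fix a
    have "a + 0 \<in> (+) a ` U" using U0 by (rule imageI)
    then have "g (a + 0) \<in> g ` ((+) a ` U)" by (rule imageI)
    then have "g a \<in> T a 0" by (simp add: Ta0)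
    then have "T a 0 = T 0 (g a)" using inT by (rule K)
    then show "g ` ((+) a ` U) = (+) (g a) ` X" using Ta0 T0y by simp
  qed
  have ch: "cosetmap h X W"
    unfolding cosetmap_def
  proof
    fix c
    obtain b where b: "h ` T 0 c = (+) b ` W" using hT by blast
    have "h c \<in> h ` T 0 c" using inT by (rule imageI)
    then have hc1: "h c \<in> (+) b ` W" by (simp only: b)
    have "h c = h c + 0" by simp
    then have hc2: "h c \<in> (+) (h c) ` W" using aW by (intro image_eqI) (auto simp: addcl_def)
    have "(+) b ` W = (+) (h c) ` W" by (rule coset_meet[OF aW hc1 hc2])
    then show "h ` ((+) c ` X) = (+) (h c) ` W" using b T0y by simp
  qed
  show ?thesis using aX cg ch by blast
qed

lemma lin_transfer:
  fixes M f :: "('b,'m) vv \<Rightarrow> ('b,'m) vv"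
  assumes add: "\<And>x y. M (x + y) = M x + M y" and bM: "bij M"
    and cm: "cosetmap (M \<circ> f) U X" and aX: "addcl X"
  shows "cosetmap f U (inv M ` X) \<and> addcl (inv M ` X)"
proof -
  have iMM: "inv M (M x) = x" for x using bM by (simp add: bij_is_inj)
  have MiM: "M (inv M x) = x" for x using bM by (simp add: bij_is_surj surj_f_inv_f)
  have iadd: "inv M (x + y) = inv M x + inv M y" for x y
  proof -
    have "M (inv M x + inv M y) = x + y" by (simp add: add MiM)
    then have "inv M (M (inv M x + inv M y)) = inv M (x + y)" by simp
    then show ?thesis by (simp add: iMM)
  qed
  have i0: "inv M 0 = 0" using iadd[of 0 0] by simp
  have "f ` ((+) a ` U) = (+) (f a) ` (inv M ` X)" for a
  proof -
    have "f ` ((+) a ` U) = inv M ` ((M \<circ> f) ` ((+) a ` U))"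
      by (simp add: image_image iMM)
    also have "\<dots> = inv M ` ((+) (M (f a)) ` X)" using cm by (simp add: cosetmap_def)
    also have "\<dots> = (+) (f a) ` (inv M ` X)"
      by (simp add: image_image iadd iMM)
    finally show ?thesis .
  qed
  moreover have "addcl (inv M ` X)"
    using aX i0 unfolding addcl_def by (auto simp: iadd[symmetric])
  ultimately show ?thesis by (simp add: cosetmap_def)
qed

fun rnds :: "(nat \<Rightarrow> 'b \<Rightarrow> ('m \<Rightarrow> bit) \<Rightarrow> ('m \<Rightarrow> bit))
    \<Rightarrow> (nat \<Rightarrow> ('b \<Rightarrow> 'm \<Rightarrow> bit) \<Rightarrow> ('b \<Rightarrow> 'm \<Rightarrow> bit))
    \<Rightarrow> (nat \<Rightarrow> ('b \<Rightarrow> 'm \<Rightarrow> bit)) \<Rightarrow> nat \<Rightarrow> nat \<Rightarrow> ('b \<Rightarrow> 'm \<Rightarrow> bit) \<Rightarrow> ('b \<Rightarrow> 'm \<Rightarrow> bit)" where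
  "rnds S L kk a 0 v = v"
| "rnds S L kk a (Suc d) v =
     L (a + Suc d) (parallel_map (S (a + Suc d)) (rnds S L kk a d v)) + kk (a + Suc d)"

lemma enc_split: "enc_rounds S L kk (a + d) v = rnds S L kk a d (enc_rounds S L kk a v)"
  by (induction d) auto

lemma enc_rnds: "enc_rounds S L kk n = rnds S L kk 0 n"
  using enc_split[of S L kk 0 n] by (auto simp: fun_eq_iff)

lemma rnds_cong:
  assumes "\<And>h. a < h \<Longrightarrow> h \<le> a + d \<Longrightarrow> kk h = kk' h"
  shows "rnds S L kk a d v = rnds S L kk' a d v"
  using assms by (induction d) auto

lemma enc_cong:
  assumes "\<And>h. 1 \<le> h \<Longrightarrow> h \<le> n \<Longrightarrow> kk h = kk' h"
  shows "enc_rounds S L kk n v = enc_rounds S L kk' n v"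
  using assms by (induction n) auto

lemma pm_bij:
  assumes "\<And>j. bij (F j)"
  shows "bij (parallel_map F)"
proof (rule o_bij)
  show "parallel_map (\<lambda>j. inv (F j)) \<circ> parallel_map F = id"
    using assms by (auto simp: fun_eq_iff parallel_map_def bij_is_inj)
  show "parallel_map F \<circ> parallel_map (\<lambda>j. inv (F j)) = id"
    using assms by (auto simp: fun_eq_iff parallel_map_def bij_is_surj surj_f_inv_f)
qed

lemma transl_bij: "bij (\<lambda>v. v + (c::('b,'m) vv))"
proof (rule o_bij)
  show "(\<lambda>v. v + c) \<circ> (\<lambda>v. v + c) = id" by (auto simp: fun_eq_iff vvadd_cancel)
  then show "(\<lambda>v. v + c) \<circ> (\<lambda>v. v + c) = id" .
qed

lemma round_bij:
  assumes "\<And>j. bij (F j)" "bij M"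
  shows "bij (\<lambda>v. M (parallel_map F v) + (c::('b,'m) vv))"
proof -
  have e: "(\<lambda>v. M (parallel_map F v) + c) = ((\<lambda>v. v + c) \<circ> M) \<circ> parallel_map F"
    by (simp add: fun_eq_iff)
  have "bij (((\<lambda>v. v + c) \<circ> M) \<circ> parallel_map F)"
    by (intro bij_comp pm_bij assms transl_bij)
  then show ?thesis by (simp only: e)
qed

lemma rnds_bij:
  assumes "\<And>h j. a < h \<Longrightarrow> h \<le> a + d \<Longrightarrow> bij (S h j)"
    and "\<And>h. a < h \<Longrightarrow> h \<le> a + d \<Longrightarrow> bij (L h)"
  shows "bij (rnds S L kk a d)"
  using assms
proof (induction d)
  case 0
  then show ?case by (simp add: id_def[symmetric])
next
  case (Suc d)
  have b1: "bij (rnds S L kk a d)" using Suc by auto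
  have b2: "bij (\<lambda>v. L (a + Suc d) (parallel_map (S (a + Suc d)) v) + kk (a + Suc d))"
    by (rule round_bij) (use Suc.prems in auto)
  have e: "rnds S L kk a (Suc d) = (\<lambda>v. L (a + Suc d) (parallel_map (S (a + Suc d)) v) + kk (a + Suc d)) \<circ> rnds S L kk a d"
    by (simp add: fun_eq_iff)
  have "bij ((\<lambda>v. L (a + Suc d) (parallel_map (S (a + Suc d)) v) + kk (a + Suc d)) \<circ> rnds S L kk a d)"
    using b1 b2 by (rule bij_comp)
  then show ?case by (simp only: e)
qed

lemma inj_image_fun: "inj f \<Longrightarrow> inj (image f)"
  by (simp add: inj_def inj_image_eq_iff)

lemma wall_empty: "wall {} = {0}"
  by (auto simp: wall_def fun_eq_iff)

lemma wall_UNIV: "wall UNIV = UNIV"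
  by (auto simp: wall_def)

theorem theorem3p3:
  fixes S :: "nat \<Rightarrow> 'b::finite \<Rightarrow> ('m::finite \<Rightarrow> bit) \<Rightarrow> ('m \<Rightarrow> bit)"
    and L :: "nat \<Rightarrow> ('b \<Rightarrow> 'm \<Rightarrow> bit) \<Rightarrow> ('b \<Rightarrow> 'm \<Rightarrow> bit)"
    and Phi :: "'k \<Rightarrow> nat \<Rightarrow> ('b \<Rightarrow> 'm \<Rightarrow> bit)"
    and ell i r :: nat
  assumes m_gt: "CARD('m) > 1" and b_gt: "CARD('b) > 1"
    and sboxes: "\<forall>h\<in>{1..ell}. \<forall>j. bij (S h j) \<and> S h j 0 = 0"
    and lins: "\<forall>h\<in>{1..ell}. L h \<in> GL_V"
    and i_range: "2 \<le> i" "i \<le> ell - 1"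
    and indep: "three_round_indep Phi ell i"
    and du: "\<forall>h\<in>{i, i+1}. \<forall>j. diff_uniform (S h j) (2 ^ r)"
    and r_lt: "r < CARD('m)"
    and sai: "\<forall>h\<in>{i, i+1}. \<forall>j. strongly_anti_invariant (S h j) (r - 1)"
    and sp: "strongly_proper (L i)"
  shows "(\<not> (\<exists>A B. partition_on UNIV A \<and> partition_on UNIV B \<and>
              \<not> trivial_partition A \<and> \<not> trivial_partition B \<and>
              (\<forall>k. maps_partition (enc_rounds S L (Phi k) ell) A B)))
       \<and> primitive (gen_group {enc_rounds S L (Phi k) ell | k. True})"
proof -
  obtain j where ij: "i = Suc (Suc j)" using i_range(1) by (metis add_2_eq_Suc le_Suc_ex)
  define d where "d = ell - (i + 1)"
  have ell_eq: "ell = (i + 1) + d" using i_range unfolding d_def by simp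
  obtain kbar where kb: "\<forall>x y z. \<exists>k. \<forall>h\<in>{1..ell}. Phi k h =
      (if h = i - 1 then x else if h = i then y else if h = i + 1 then z else kbar h)"
    using indep unfolding three_round_indep_def by blast
  define kx where "kx x y z h = (if h = i - 1 then x else if h = i then y else if h = i + 1 then z else kbar h)"
    for x y z and h :: nat
  define G where "G h = L h \<circ> parallel_map (S h)" for h
  define Pre where "Pre = enc_rounds S L kbar j"
  define P0 where "P0 = G (Suc j) \<circ> Pre"
  define Post where "Post = rnds S L kbar (i + 1) d"
  define F where "F x y z w = G (i + 1) (G i (w + x) + y) + z" for x y z w
  have bS: "bij (S h j')" "S h j' 0 = 0" if "1 \<le> h" "h \<le> ell" for h j'
    using sboxes that by auto
  have GLh: "L h \<in> GL_V" if "1 \<le> h" "h \<le> ell" for h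
    using lins that by auto
  have bL: "bij (L h)" if "1 \<le> h" "h \<le> ell" for h
    using GLh[OF that] by (simp add: GL_V_def)
  have addL: "L h (x + y) = L h x + L h y" if "1 \<le> h" "h \<le> ell" for h x y
    using GLh[OF that] by (simp add: GL_V_def linear_iff)
  have L0: "L h 0 = 0" if "1 \<le> h" "h \<le> ell" for h
    using addL[OF that, of 0 0] by simp
  have bG: "bij (G h)" if "1 \<le> h" "h \<le> ell" for h
    unfolding G_def by (intro bij_comp pm_bij bS bL that)
  have G0: "G h 0 = 0" if "1 \<le> h" "h \<le> ell" for h
    using bS(2)[OF that] L0[OF that] by (simp add: G_def parallel_map_def zero_fun_def[symmetric])
  have bPre: "bij Pre"
    unfolding Pre_def enc_rnds by (rule rnds_bij) (use bS bL ij ell_eq in auto)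
  have bP0: "bij P0"
    unfolding P0_def by (rule bij_comp[OF bPre bG]) (use ij ell_eq in auto)
  have bPost: "bij Post"
    unfolding Post_def by (rule rnds_bij) (use bS bL ell_eq in auto)
  have iP: "inv Post (Post w) = w" for w using bPost by (simp add: bij_is_inj)
  have Pi: "Post (inv Post w) = w" for w using bPost by (simp add: bij_is_surj surj_f_inv_f)
  have decomp: "enc_rounds S L (kx x y z) ell v = Post (F x y z (P0 v))" for x y z v
  proof -
    have "enc_rounds S L (kx x y z) ell v
        = rnds S L (kx x y z) (i + 1) d (enc_rounds S L (kx x y z) (i + 1) v)"
      using enc_split[of S L "kx x y z" "i + 1" d v] ell_eq by simp
    also have "\<dots> = Post (enc_rounds S L (kx x y z) (i + 1) v)"
      unfolding Post_def by (rule rnds_cong) (auto simp: kx_def ij)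
    also have "enc_rounds S L (kx x y z) j v = Pre v"
      unfolding Pre_def by (rule enc_cong) (simp add: kx_def ij)
    then have "enc_rounds S L (kx x y z) (i + 1) v = F x y z (P0 v)"
      by (simp add: ij F_def P0_def G_def kx_def)
    finally show ?thesis .
  qed
  have Ekx: "\<exists>k. enc_rounds S L (Phi k) ell = Post \<circ> F x y z \<circ> P0" for x y z
  proof -
    obtain k where k: "\<forall>h\<in>{1..ell}. Phi k h = kx x y z h" using kb unfolding kx_def by blast
    have "enc_rounds S L (Phi k) ell v = Post (F x y z (P0 v))" for v
    proof -
      have "enc_rounds S L (Phi k) ell v = enc_rounds S L (kx x y z) ell v"
        by (rule enc_cong) (use k in auto)
      then show ?thesis by (simp add: decomp)
    qed
    then show ?thesis by (auto simp: fun_eq_iff)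
  qed
  have bGi: "bij (G i)" "bij (G (i + 1))" using bG ij ell_eq by auto
  have bF: "bij (F x y z)" for x y z
  proof -
    have e: "F x y z = (\<lambda>v. v + z) \<circ> G (i + 1) \<circ> (\<lambda>v. v + y) \<circ> G i \<circ> (\<lambda>v. v + x)"
      by (simp add: fun_eq_iff F_def)
    show ?thesis unfolding e by (intro bij_comp transl_bij bGi)
  qed
  have part1: "\<not> (\<exists>A B. partition_on UNIV A \<and> partition_on UNIV B \<and>
              \<not> trivial_partition A \<and> \<not> trivial_partition B \<and>
              (\<forall>k. maps_partition (enc_rounds S L (Phi k) ell) A B))"
  proof
    assume "\<exists>A B. partition_on UNIV A \<and> partition_on UNIV B \<and>
              \<not> trivial_partition A \<and> \<not> trivial_partition B \<and>
              (\<forall>k. maps_partition (enc_rounds S L (Phi k) ell) A B)"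
    then obtain A B where pA: "partition_on UNIV A" and pB: "partition_on UNIV B"
      and ntA: "\<not> trivial_partition A"
      and mp: "\<And>k. maps_partition (enc_rounds S L (Phi k) ell) A B" by blast
    define A' where "A' = (image P0) ` A"
    define B' where "B' = (image (inv Post)) ` B"
    have mF: "(\<lambda>X. F x y z ` X) ` A' = B'" for x y z
    proof -
      obtain k where k: "enc_rounds S L (Phi k) ell = Post \<circ> F x y z \<circ> P0" using Ekx by blast
      have mpk: "(\<lambda>X. (Post \<circ> F x y z \<circ> P0) ` X) ` A = B"
        using mp[of k] unfolding maps_partition_def k .
      have "(\<lambda>X. F x y z ` X) ` A' = (image (inv Post)) ` ((\<lambda>X. (Post \<circ> F x y z \<circ> P0) ` X) ` A)"
        unfolding A'_def image_image by (simp add: image_image iP)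
      also have "\<dots> = B'" unfolding mpk B'_def ..
      finally show ?thesis .
    qed
    have pA': "partition_on UNIV A'" unfolding A'_def by (rule partition_image[OF pA bP0])
    have pB': "partition_on UNIV B'" unfolding B'_def by (rule partition_image[OF pB bij_imp_bij_inv[OF bPost]])
    have ntA': "\<not> trivial_partition A'" unfolding A'_def by (rule nontrivial_image[OF ntA bP0])
    have invB': "(image ((+) z)) ` B' = B'" for z
    proof -
      have "(image ((+) z)) ` B' = (image ((+) z)) ` ((\<lambda>X. F 0 0 0 ` X) ` A')"
        using mF[of 0 0 0] by simp
      also have "\<dots> = (\<lambda>X. F 0 0 z ` X) ` A'"
        by (simp add: image_image F_def add.commute)
      also have "\<dots> = B'" by (rule mF)
      finally show ?thesis .
    qed
    have invA': "(image ((+) x)) ` A' = A'" for x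
    proof -
      have "(image (F 0 0 0)) ` ((image ((+) x)) ` A') = (\<lambda>X. F x 0 0 ` X) ` A'"
        by (simp add: image_image F_def add.commute)
      also have "\<dots> = B'" by (rule mF)
      also have "\<dots> = (image (F 0 0 0)) ` A'" using mF[of 0 0 0] by simp
      finally have eq: "(image (F 0 0 0)) ` ((image ((+) x)) ` A') = (image (F 0 0 0)) ` A'" .
      have inj: "inj (image (F 0 0 0))"
        using bF[of 0 0 0] by (simp add: inj_image_fun bij_is_inj)
      show ?thesis using eq unfolding inj_image_eq_iff[OF inj] .
    qed
    obtain U where Uprop: "addcl U \<and> (\<forall>a. (+) a ` U \<in> A') \<and> (\<forall>X\<in>A'. \<exists>a. X = (+) a ` U) \<and>
           (\<not> trivial_partition A' \<longrightarrow> U \<noteq> {0} \<and> U \<noteq> UNIV)"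
      using transinv[OF pA' invA'] by (elim exE)
    then have aU: "addcl U" and cU: "\<And>a. (+) a ` U \<in> A'" and U0: "U \<noteq> {0}" and UU: "U \<noteq> UNIV"
      using ntA' by simp_all
    obtain W where Wprop: "addcl W \<and> (\<forall>a. (+) a ` W \<in> B') \<and> (\<forall>X\<in>B'. \<exists>a. X = (+) a ` W) \<and>
           (\<not> trivial_partition B' \<longrightarrow> W \<noteq> {0} \<and> W \<noteq> UNIV)"
      using transinv[OF pB' invB'] by (elim exE)
    then have aW: "addcl W" and cW: "\<And>X. X \<in> B' \<Longrightarrow> \<exists>b. X = (+) b ` W"
      by simp_all
    have hyp: "\<exists>b. (\<lambda>w. G (i + 1) (G i w + y)) ` ((+) a ` U) = (+) b ` W" for a y
    proof -
      have "F 0 y 0 ` ((+) a ` U) \<in> B'" using mF[of 0 y 0] cU[of a] by blast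
      then obtain b where "F 0 y 0 ` ((+) a ` U) = (+) b ` W" using cW by blast
      moreover have "F 0 y 0 = (\<lambda>w. G (i + 1) (G i w + y))" by (simp add: fun_eq_iff F_def)
      ultimately show ?thesis by auto
    qed
    have Gi0: "G i 0 = 0" using G0 ij ell_eq by auto
    obtain X where aX: "addcl X" and cgX: "cosetmap (G i) U X" and chX: "cosetmap (G (i + 1)) X W"
      using twolayer[OF bGi(1) bGi(2) Gi0 aU aW hyp] by blast
    have rng: "1 \<le> i" "i \<le> ell" "1 \<le> i + 1" "i + 1 \<le> ell" using ij ell_eq by auto
    have t1: "cosetmap (parallel_map (S i)) U (inv (L i) ` X) \<and> addcl (inv (L i) ` X)"
      by (rule lin_transfer[OF addL[OF rng(1,2)] bL[OF rng(1,2)]]) (use cgX aX in \<open>simp_all add: G_def\<close>)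
    have t2: "cosetmap (parallel_map (S (i + 1))) X (inv (L (i + 1)) ` W) \<and> addcl (inv (L (i + 1)) ` W)"
      by (rule lin_transfer[OF addL[OF rng(3,4)] bL[OF rng(3,4)]]) (use chX aW in \<open>simp_all add: G_def\<close>)
    define I where "I = {j. \<exists>u\<in>U. u j \<noteq> 0}"
    define I' where "I' = {j. \<exists>u\<in>X. u j \<noteq> 0}"
    have C1: "U = wall I \<and> inv (L i) ` X = wall I"
      unfolding I_def
      by (rule lemmaC[where F="S i" and r=r]) (use bS[OF rng(1,2)] du sai r_lt aU t1 in auto)
    have C2: "X = wall I' \<and> inv (L (i + 1)) ` W = wall I'"
      unfolding I'_def
      by (rule lemmaC[where F="S (i + 1)" and r=r]) (use bS[OF rng(3,4)] du sai r_lt aX t2 in auto)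
    have LX: "L i ` wall I = X"
    proof -
      have "L i ` (inv (L i) ` X) = X"
        by (simp add: image_image Pi bij_is_surj surj_f_inv_f bL[OF rng(1,2)])
      then show ?thesis using C1 by simp
    qed
    have I1: "I \<noteq> {}" using U0 C1 wall_empty by auto
    have I2: "I \<noteq> UNIV" using UU C1 wall_UNIV by auto
    have X0: "X \<noteq> {0}"
    proof
      assume X0: "X = {0}"
      obtain u where u: "u \<in> U" "u \<noteq> 0" using U0 aU by (auto simp: addcl_def)
      have "L i u \<in> X" using LX C1 u(1) by blast
      then have "L i u = L i 0" using X0 L0[OF rng(1,2)] by simp
      then show False using u(2) bL[OF rng(1,2)] by (simp add: bij_is_inj inj_eq)
    qed
    have XU: "X \<noteq> UNIV"
    proof
      assume XU: "X = UNIV"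
      have "inv (L i) ` X = UNIV"
        unfolding XU by (rule bij_is_surj[OF bij_imp_bij_inv[OF bL[OF rng(1,2)]]])
      then show False using C1 UU by simp
    qed
    have I'1: "I' \<noteq> {}" using X0 C2 wall_empty by auto
    have I'2: "I' \<noteq> UNIV" using XU C2 wall_UNIV by auto
    have "is_wall (wall I)" using I1 I2 by (auto simp: is_wall_def)
    moreover have "is_wall (wall I')" using I'1 I'2 by (auto simp: is_wall_def)
    moreover have "L i ` wall I \<subseteq> wall I'" using LX C2 by simp
    ultimately show False using sp unfolding strongly_proper_def by blast
  qed
  have part2: "primitive (gen_group {enc_rounds S L (Phi k) ell | k. True})"
  proof -
    define Gens where "Gens = {enc_rounds S L (Phi k) ell | k. True}"
    have inG: "enc_rounds S L (Phi k) ell \<in> gen_group Gens" for k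
    proof -
      have "enc_rounds S L (Phi k) ell \<in> Gens" unfolding Gens_def by blast
      then have "id \<circ> enc_rounds S L (Phi k) ell \<in> gen_group Gens"
        by (rule gen_mult[OF _ gen_id])
      then show ?thesis by simp
    qed
    have trans: "\<exists>g\<in>gen_group Gens. g p = q" for p q
    proof -
      obtain k0 where k0: "enc_rounds S L (Phi k0) ell = Post \<circ> F 0 0 0 \<circ> P0" using Ekx by blast
      define E0 where "E0 = enc_rounds S L (Phi k0) ell"
      have bE0: "bij E0" unfolding E0_def k0
        by (intro bij_comp bP0 bPost bF)
      define w where "w = inv E0 p"
      have E0w: "E0 w = p" unfolding w_def using bE0 by (simp add: bij_is_surj surj_f_inv_f)
      define z where "z = F 0 0 0 (P0 w) + inv Post q"
      obtain k1 where k1: "enc_rounds S L (Phi k1) ell = Post \<circ> F 0 0 z \<circ> P0" using Ekx by blast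
      define E1 where "E1 = enc_rounds S L (Phi k1) ell"
      have "E0 \<in> Gens" unfolding E0_def Gens_def by blast
      moreover have "E1 \<in> gen_group Gens" unfolding E1_def by (rule inG)
      ultimately have gG: "E1 \<circ> inv E0 \<in> gen_group Gens" by (rule gen_inv)
      have "F 0 0 z (P0 w) = F 0 0 0 (P0 w) + z" by (simp add: F_def)
      also have "\<dots> = inv Post q" unfolding z_def by (simp add: add.assoc[symmetric])
      finally have Fz: "F 0 0 z (P0 w) = inv Post q" .
      have "(E1 \<circ> inv E0) p = E1 w" by (simp add: w_def)
      also have "\<dots> = Post (F 0 0 z (P0 w))" unfolding E1_def k1 by simp
      also have "\<dots> = q" unfolding Fz by (rule Pi)
      finally have "(E1 \<circ> inv E0) p = q" .
      then show ?thesis using gG by blast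
    qed
    have parts: "trivial_partition P"
      if pP: "partition_on UNIV P" and mP: "\<forall>g\<in>gen_group Gens. maps_partition g P P" for P
    proof (rule ccontr)
      assume "\<not> trivial_partition P"
      moreover have "\<forall>k. maps_partition (enc_rounds S L (Phi k) ell) P P" using mP inG by blast
      ultimately show False using part1 pP by blast
    qed
    show ?thesis unfolding primitive_def Gens_def[symmetric] using trans parts by blast
  qed
  show ?thesis using part1 part2 by blast
qed

end
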